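(* Let $n\ge4$ and let $D_0\subsetneq D_1\subsetneq\dots\subsetneq D_m$ be a chain of sets of pairwise noncrossing diagonals of $P_n$. Then the points $\Phi(D_0),\dots,\Phi(D_m)$ are affinely independent, so their convex hull $\Phi(\Delta)$ is an $m$-simplex. In particular, for a maximal chain (a full flag of faces of $K_{n-1}$, with $m=n-3$), the image is an $(n-3)$-simplex.
   Context: $P_n$ is a regular $n$-gon whose edges are labeled cyclically by a fixed circular ordering; two diagonals cross if they meet in the interior; $\mathcal D$ is the set of diagonals. Faces of the associahedron $K_{n-1}$ correspond to sets of pairwise noncrossing diagonals (face of $D$ contains face of $D'$ iff $D\subseteq D'$), and a chain of such sets corresponds to a flag of faces and to a simplex $\Delta$ of the barycentric subdivision of $K_{n-1}$. For a triangulation $T$, $\Phi(T)\in\mathbb R^{\mathcal D}$ has $d$-coordinate $1/(n-3)$ if $d\in T$ and $0$ otherwise; for a set $D$ of pairwise noncrossing diagonals, $\Phi(D)$ is the average of $\Phi(T)$ over triangulations $T\supseteq D$; $\Phi(\Delta)$ is the convex hull of the $\Phi(D_i)$. *)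

theory Defs
  imports "HOL-Analysis.Analysis" "HOL-Library.Function_Algebras"
begin

text \<open>The real vector space structure on functions (pointwise), so that
  \<open>\<real>^\<D>\<close> can be modelled as the type of real-valued functions on diagonals.\<close>

instantiation "fun" :: (type, real_vector) real_vector
begin
definition scaleR_fun :: "real \<Rightarrow> ('a \<Rightarrow> 'b) \<Rightarrow> 'a \<Rightarrow> 'b"
  where "scaleR_fun r f = (\<lambda>x. r *\<^sub>R f x)"
instance
  by standard (auto simp: scaleR_fun_def fun_eq_iff scaleR_add_right scaleR_add_left)
end

text \<open>Vertices of the regular n-gon are labelled 0,...,n-1 in cyclic order.
  A diagonal is a pair (i,j) with i < j < n of non-adjacent vertices.\<close>

definition diagonals :: "nat \<Rightarrow> (nat \<times> nat) set" where
  "diagonals n = {(i, j). i < j \<and> j < n \<and> i + 1 < j \<and> \<not> (i = 0 \<and> j = n - 1)}"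

text \<open>Two diagonals cross iff they meet in the interior of the polygon, i.e. their
  endpoints strictly interleave.\<close>

definition crosses :: "nat \<times> nat \<Rightarrow> nat \<times> nat \<Rightarrow> bool" where
  "crosses d e = (case d of (i, j) \<Rightarrow> case e of (k, l) \<Rightarrow>
      (i < k \<and> k < j \<and> j < l) \<or> (k < i \<and> i < l \<and> l < j))"

definition noncrossing :: "nat \<Rightarrow> (nat \<times> nat) set \<Rightarrow> bool" where
  "noncrossing n D = (D \<subseteq> diagonals n \<and> (\<forall>d\<in>D. \<forall>e\<in>D. \<not> crosses d e))"

definition triangulation :: "nat \<Rightarrow> (nat \<times> nat) set \<Rightarrow> bool" where
  "triangulation n T = (noncrossing n T \<and>
      (\<forall>d\<in>diagonals n. noncrossing n (insert d T) \<longrightarrow> d \<in> T))"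

definition PhiT :: "nat \<Rightarrow> (nat \<times> nat) set \<Rightarrow> (nat \<times> nat) \<Rightarrow> real" where
  "PhiT n T = (\<lambda>d. if d \<in> T then 1 / (real n - 3) else 0)"

definition Phi :: "nat \<Rightarrow> (nat \<times> nat) set \<Rightarrow> (nat \<times> nat) \<Rightarrow> real" where
  "Phi n D = (let Ts = {T. triangulation n T \<and> D \<subseteq> T} in
      (1 / real (card Ts)) *\<^sub>R (\<Sum>T\<in>Ts. PhiT n T))"

end

theory Submission
  imports Defs
begin

lemma sum_fun_apply: "(sum f A) x = sum (\<lambda>a. f a x) A"
  by (induction A rule: infinite_finite_induct) (auto simp: plus_fun_def zero_fun_def)

lemma crosses_sym: "crosses d e = crosses e d"
  by (cases d; cases e) (auto simp: crosses_def)

lemma finite_diagonals: "finite (diagonals n)"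
proof -
  have "diagonals n \<subseteq> {..<n} \<times> {..<n}" by (auto simp: diagonals_def)
  thus ?thesis by (rule finite_subset) auto
qed

lemma extend_triang:
  assumes "noncrossing n D"
  shows "\<exists>T. triangulation n T \<and> D \<subseteq> T"
proof -
  let ?C = "{T. noncrossing n T \<and> D \<subseteq> T}"
  have "?C \<subseteq> Pow (diagonals n)" by (auto simp: noncrossing_def)
  hence fin: "finite ?C" using finite_diagonals by (meson finite_Pow_iff finite_subset)
  have ne: "?C \<noteq> {}" using assms by auto
  obtain T where T: "T \<in> ?C" "\<forall>b\<in>?C. T \<le> b \<longrightarrow> T = b"
    using finite_has_maximal[OF fin ne] by blast
  have "triangulation n T"
    unfolding triangulation_def
  proof (intro conjI ballI impI)
    show "noncrossing n T" using T by auto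
    fix d assume "d \<in> diagonals n" "noncrossing n (insert d T)"
    hence "insert d T \<in> ?C" using T by auto
    hence "T = insert d T" using T(2) by blast
    thus "d \<in> T" by blast
  qed
  thus ?thesis using T by auto
qed

lemma arith1: fixes p q i j a b :: nat
  assumes "p<q" "\<not>(p=i \<and> q=j)" "\<not>(p<i\<and>i<q\<and>q<j)" "\<not>(i<p\<and>p<j\<and>j<q)"
  "a = i+1 \<or> (\<not>(p<i\<and>i<q\<and>q<a) \<and> \<not>(i<p\<and>p<a\<and>a<q))"
  "b < i" "(\<not>(p<b \<and> b<q \<and> q<j) \<and> \<not>(b<p\<and>p<j\<and>j<q)) \<or> (b=0 \<and> q \<le> j)"
  "p=i \<Longrightarrow> i<q \<Longrightarrow> q<j \<Longrightarrow> q \<le> a"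
  "q=j \<Longrightarrow> p<i \<Longrightarrow> p\<le>b" "i<a" "a<j"
shows "\<not>(p<b \<and> b<q \<and> q<a) \<and> \<not>(b<p \<and> p<a \<and> a<q)"
proof (intro conjI notI)
  assume h: "p<b \<and> b<q \<and> q<a"
  show False
  proof (cases "i < q")
    case True thus False using h assms(3,6,11) by arith
  next
    case False thus False using h assms(7,6,11) by arith
  qed
next
  assume h: "b<p \<and> p<a \<and> a<q"
  show False
  proof (cases "p < i")
    case True
    show False
    proof (cases "q < j")
      case True thus False using h \<open>p<i\<close> assms(3,10) by arith
    next
      case False
      show False
      proof (cases "q = j")
        case True thus False using h \<open>p<i\<close> assms(9) by arith
      next
        case False thus False using h \<open>p<i\<close> \<open>\<not> q<j\<close> assms(7,11) by arith
      qed
    qed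
  next
    case False
    show False
    proof (cases "p = i")
      case True
      show False
      proof (cases "q < j")
        case True thus False using h \<open>p=i\<close> assms(8,10) by arith
      next
        case False thus False using h \<open>p=i\<close> assms(2,6,7,11) by arith
      qed
    next
      case False thus False using h \<open>\<not> p < i\<close> assms(5) by arith
    qed
  qed
qed
lemma arith2: fixes p q i j a b :: nat
  assumes "p<q" "\<not>(p=i \<and> q=j)" "\<not>(p<i\<and>i<q\<and>q<j)" "\<not>(i<p\<and>p<j\<and>j<q)"
  "a = i+1 \<or> (\<not>(p<i\<and>i<q\<and>q<a) \<and> \<not>(i<p\<and>p<a\<and>a<q))"
  "b = j+1 \<or> (\<not>(p<j \<and> j<q \<and> q<b) \<and> \<not>(j<p\<and>p<b\<and>b<q))"
  "p=i \<Longrightarrow> i<q \<Longrightarrow> q<j \<Longrightarrow> q \<le> a"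
  "\<not>(q=j \<and> p<i)" "p = j \<Longrightarrow> q \<le> b" "i<a" "a<j" "j<b"
shows "\<not>(a<p \<and> p<b \<and> b<q) \<and> \<not>(p<a \<and> a<q \<and> q<b)"
proof (intro conjI notI)
  assume h: "a<p \<and> p<b \<and> b<q"
  show False
  proof (cases "p < j")
    case True thus False using h assms(4,10,12) by arith
  next
    case False
    show False
    proof (cases "p = j")
      case True thus False using h assms(9) by arith
    next
      case False thus False using h \<open>\<not> p < j\<close> assms(6) by arith
    qed
  qed
next
  assume h: "p<a \<and> a<q \<and> q<b"
  show False
  proof (cases "p < i")
    case True
    show False
    proof (cases "q < j")
      case True thus False using h \<open>p<i\<close> assms(3,10) by arith
    next
      case False
      show False
      proof (cases "q = j")
        case True thus False using h \<open>p<i\<close> assms(8) by arith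
      next
        case False thus False using h \<open>p<i\<close> \<open>\<not> q<j\<close> assms(6,10,11) by arith
      qed
    qed
  next
    case False
    show False
    proof (cases "p = i")
      case True
      show False
      proof (cases "q < j")
        case True thus False using h \<open>p=i\<close> assms(7,10) by arith
      next
        case False thus False using h \<open>p=i\<close> assms(2,6,10,11) by arith
      qed
    next
      case False thus False using h \<open>\<not> p < i\<close> assms(5) by arith
    qed
  qed
qed

lemma crosses_iff: "crosses (x,y) (u,v) = ((x<u \<and> u<y \<and> y<v) \<or> (u<x \<and> x<v \<and> v<y))"
  by (simp add: crosses_def)

lemma flip_exists:
  assumes nc: "noncrossing n D" and nc2: "noncrossing n (insert d D)" and dD: "d \<notin> D"
  shows "\<exists>e\<in>diagonals n. crosses d e \<and> noncrossing n (insert e D)"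
proof -
  obtain i j where dij: "d = (i,j)" by (cases d)
  have dd: "d \<in> diagonals n" using nc2 by (auto simp: noncrossing_def)
  hence ij: "i < j" "j < n" "i + 1 < j" "\<not> (i = 0 \<and> j = n - 1)" using dij by (auto simp: diagonals_def)
  have Ddiag: "\<And>p q. (p,q) \<in> D \<Longrightarrow> p < q \<and> q < n \<and> p + 1 < q \<and> \<not> (p = 0 \<and> q = n - 1)"
    using nc by (auto simp: noncrossing_def diagonals_def)
  have Dd: "\<And>p q. (p,q) \<in> D \<Longrightarrow> \<not> crosses (p,q) (i,j) \<and> \<not> crosses (i,j) (p,q)"
    using nc2 dij by (auto simp: noncrossing_def)
  have DD: "\<And>p q r s. (p,q) \<in> D \<Longrightarrow> (r,s) \<in> D \<Longrightarrow> \<not> crosses (p,q) (r,s)"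
    using nc by (auto simp: noncrossing_def)
  define A where "A = {k. i < k \<and> k < j \<and> (k = i + 1 \<or> (i,k) \<in> D)}"
  have finA: "finite A" unfolding A_def by (rule finite_subset[of _ "{..<j}"]) auto
  have "i + 1 \<in> A" using ij by (auto simp: A_def)
  define a where "a = Max A"
  have aA: "a \<in> A" unfolding a_def using finA \<open>i+1 \<in> A\<close> by (intro Max_in) auto
  hence a1: "i < a" "a < j" "a = i + 1 \<or> (i,a) \<in> D" by (auto simp: A_def)
  have amax: "\<And>k. (i,k) \<in> D \<Longrightarrow> i < k \<Longrightarrow> k < j \<Longrightarrow> k \<le> a"
    unfolding a_def using finA by (intro Max_ge) (auto simp: A_def)
  define S1 where "S1 = {k. k < i \<and> ((k,j) \<in> D \<or> (j = n - 1 \<and> k = 0))}"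
  have finS1: "finite S1" unfolding S1_def by (rule finite_subset[of _ "{..<i}"]) auto
  show ?thesis
  proof (cases "S1 = {}")
    case False
    define b where "b = Max S1"
    have "b \<in> S1" unfolding b_def using finS1 False by (intro Max_in) auto
    hence b1: "b < i" "(b,j) \<in> D \<or> (j = n - 1 \<and> b = 0)" by (auto simp: S1_def)
    have bmax: "\<And>k. (k,j) \<in> D \<Longrightarrow> k < i \<Longrightarrow> k \<le> b"
      unfolding b_def using finS1 by (intro Max_ge) (auto simp: S1_def)
    have ed: "(b,a) \<in> diagonals n" using b1 a1 ij by (auto simp: diagonals_def)
    have cr: "crosses d (b,a)" using b1 a1 dij by (auto simp: crosses_def)
    have ncf: "\<not> crosses (p,q) (b,a) \<and> \<not> crosses (b,a) (p,q)" if pq: "(p,q) \<in> D" for p q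
    proof -
      have h1: "p < q" "q < n" using Ddiag[OF pq] by auto
      have h0: "\<not> (p = i \<and> q = j)" using pq dD dij by auto
      have h2: "\<not> crosses (p,q) (i,j)" "\<not> crosses (i,j) (p,q)" using Dd[OF pq] by auto
      have h3: "(i,a) \<in> D \<Longrightarrow> \<not> crosses (p,q) (i,a) \<and> \<not> crosses (i,a) (p,q)"
        using DD pq by blast
      have h4: "(b,j) \<in> D \<Longrightarrow> \<not> crosses (p,q) (b,j) \<and> \<not> crosses (b,j) (p,q)"
        using DD pq by blast
      have h5: "p = i \<Longrightarrow> i < q \<Longrightarrow> q < j \<Longrightarrow> q \<le> a" using amax pq by blast
      have h6: "q = j \<Longrightarrow> p < i \<Longrightarrow> p \<le> b" using bmax pq by blast
      have A3: "\<not>(p<i\<and>i<q\<and>q<j)" "\<not>(i<p\<and>p<j\<and>j<q)" using h2(1) unfolding crosses_iff by blast+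
      have A5: "a = i+1 \<or> (\<not>(p<i\<and>i<q\<and>q<a) \<and> \<not>(i<p\<and>p<a\<and>a<q))"
        using a1(3) h3 unfolding crosses_iff by blast
      have A7: "(\<not>(p<b \<and> b<q \<and> q<j) \<and> \<not>(b<p\<and>p<j\<and>j<q)) \<or> (b=0 \<and> q \<le> j)"
        using b1(2) h4 h1 unfolding crosses_iff by auto
      have "\<not>(p<b \<and> b<q \<and> q<a) \<and> \<not>(b<p \<and> p<a \<and> a<q)"
        by (rule arith1[OF h1(1) h0 A3 A5 b1(1) A7 h5 h6 a1(1,2)])
      thus ?thesis unfolding crosses_iff by blast
    qed
    have "noncrossing n (insert (b,a) D)"
      using nc ed ncf unfolding noncrossing_def
      by (auto simp: crosses_iff)
    thus ?thesis using ed cr by blast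
  next
    case True
    have jn: "j < n - 1"
    proof (rule ccontr)
      assume "\<not> j < n - 1"
      hence "j = n - 1" using ij by auto
      moreover have "0 < i" using ij \<open>j = n - 1\<close> by auto
      ultimately have "0 \<in> S1" by (auto simp: S1_def)
      thus False using True by auto
    qed
    have noj: "\<And>k. k < i \<Longrightarrow> (k,j) \<notin> D" using True by (auto simp: S1_def)
    define S2 where "S2 = {k. j < k \<and> k < n \<and> (k = j + 1 \<or> (j,k) \<in> D)}"
    have finS2: "finite S2" unfolding S2_def by (rule finite_subset[of _ "{..<n}"]) auto
    have "j + 1 \<in> S2" using jn by (auto simp: S2_def)
    define b where "b = Max S2"
    have "b \<in> S2" unfolding b_def using finS2 \<open>j+1 \<in> S2\<close> by (intro Max_in) auto
    hence b1: "j < b" "b < n" "b = j + 1 \<or> (j,b) \<in> D" by (auto simp: S2_def)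
    have bmax: "\<And>k. (j,k) \<in> D \<Longrightarrow> j < k \<Longrightarrow> k < n \<Longrightarrow> k \<le> b"
      unfolding b_def using finS2 by (intro Max_ge) (auto simp: S2_def)
    have ed: "(a,b) \<in> diagonals n" using b1 a1 ij by (auto simp: diagonals_def)
    have cr: "crosses d (a,b)" using b1 a1 dij by (auto simp: crosses_def)
    have ncf: "\<not> crosses (p,q) (a,b) \<and> \<not> crosses (a,b) (p,q)" if pq: "(p,q) \<in> D" for p q
    proof -
      have h1: "p < q" "q < n" using Ddiag[OF pq] by auto
      have h0: "\<not> (p = i \<and> q = j)" using pq dD dij by auto
      have h2: "\<not> crosses (p,q) (i,j)" "\<not> crosses (i,j) (p,q)" using Dd[OF pq] by auto
      have h3: "(i,a) \<in> D \<Longrightarrow> \<not> crosses (p,q) (i,a) \<and> \<not> crosses (i,a) (p,q)"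
        using DD pq by blast
      have h4: "(j,b) \<in> D \<Longrightarrow> \<not> crosses (p,q) (j,b) \<and> \<not> crosses (j,b) (p,q)"
        using DD pq by blast
      have h5: "p = i \<Longrightarrow> i < q \<Longrightarrow> q < j \<Longrightarrow> q \<le> a" using amax pq by blast
      have h6: "q = j \<Longrightarrow> p < i \<Longrightarrow> False" using noj pq by blast
      have h7: "p = j \<Longrightarrow> q \<le> b" using bmax pq h1 by blast
      have A3: "\<not>(p<i\<and>i<q\<and>q<j)" "\<not>(i<p\<and>p<j\<and>j<q)" using h2(1) unfolding crosses_iff by blast+
      have A5: "a = i+1 \<or> (\<not>(p<i\<and>i<q\<and>q<a) \<and> \<not>(i<p\<and>p<a\<and>a<q))"
        using a1(3) h3 unfolding crosses_iff by blast
      have A6: "b = j+1 \<or> (\<not>(p<j \<and> j<q \<and> q<b) \<and> \<not>(j<p\<and>p<b\<and>b<q))"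
        using b1(3) h4 unfolding crosses_iff by blast
      have A8: "\<not>(q=j \<and> p<i)" using h6 by blast
      have "\<not>(a<p \<and> p<b \<and> b<q) \<and> \<not>(p<a \<and> a<q \<and> q<b)"
        by (rule arith2[OF h1(1) h0 A3 A5 A6 h5 A8 h7 a1(1,2) b1(1)])
      thus ?thesis unfolding crosses_iff by blast
    qed
    have "noncrossing n (insert (a,b) D)"
      using nc ed ncf unfolding noncrossing_def
      by (auto simp: crosses_iff)
    thus ?thesis using ed cr by blast
  qed
qed

lemma noncrossing_subset: "noncrossing n A \<Longrightarrow> B \<subseteq> A \<Longrightarrow> noncrossing n B"
  unfolding noncrossing_def by blast

lemma Ts_finite: "finite {T. triangulation n T \<and> D \<subseteq> T}"
proof -
  have "{T. triangulation n T \<and> D \<subseteq> T} \<subseteq> Pow (diagonals n)"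
    by (auto simp: triangulation_def noncrossing_def)
  thus ?thesis using finite_diagonals by (meson finite_Pow_iff finite_subset)
qed

lemma Phi_apply: "Phi n D d = (1 / real (card {T. triangulation n T \<and> D \<subseteq> T})) *
   (\<Sum>T\<in>{T. triangulation n T \<and> D \<subseteq> T}. PhiT n T d)"
  by (simp add: Phi_def Let_def scaleR_fun_def sum_fun_apply)

lemma Phi_in:
  assumes "noncrossing n D" "d \<in> D"
  shows "Phi n D d = 1 / (real n - 3)"
proof -
  let ?Ts = "{T. triangulation n T \<and> D \<subseteq> T}"
  have ne: "?Ts \<noteq> {}" using extend_triang[OF assms(1)] by auto
  have c: "card ?Ts > 0" using ne Ts_finite card_gt_0_iff by blast
  have "(\<Sum>T\<in>?Ts. PhiT n T d) = (\<Sum>T\<in>?Ts. 1 / (real n - 3))"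
    by (rule sum.cong) (use assms(2) in \<open>auto simp: PhiT_def\<close>)
  also have "\<dots> = real (card ?Ts) * (1 / (real n - 3))" by simp
  finally show ?thesis unfolding Phi_apply using c by simp
qed

lemma Phi_lt:
  assumes "n \<ge> 4" "noncrossing n D" "noncrossing n (insert d D)" "d \<notin> D"
  shows "Phi n D d < 1 / (real n - 3)"
proof -
  let ?Ts = "{T. triangulation n T \<and> D \<subseteq> T}"
  let ?c = "1 / (real n - 3)"
  have cpos: "?c > 0" using assms(1) by simp
  obtain e where e: "e \<in> diagonals n" "crosses d e" "noncrossing n (insert e D)"
    using flip_exists[OF assms(2-4)] by blast
  obtain T where T: "triangulation n T" "insert e D \<subseteq> T"
    using extend_triang[OF e(3)] by blast
  have dT: "d \<notin> T"
  proof
    assume "d \<in> T"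
    moreover have "e \<in> T" using T by auto
    ultimately show False using T(1) e(2) by (auto simp: triangulation_def noncrossing_def)
  qed
  have TT: "T \<in> ?Ts" using T by auto
  have c: "card ?Ts > 0" using TT Ts_finite card_gt_0_iff by blast
  have "(\<Sum>T\<in>?Ts. PhiT n T d) < (\<Sum>T\<in>?Ts. ?c)"
  proof (rule sum_strict_mono_ex1[OF Ts_finite])
    show "\<forall>x\<in>?Ts. PhiT n x d \<le> ?c" using cpos by (auto simp: PhiT_def)
    show "\<exists>a\<in>?Ts. PhiT n a d < ?c" using TT dT cpos by (auto simp: PhiT_def)
  qed
  also have "\<dots> = real (card ?Ts) * ?c" by simp
  finally have "(\<Sum>T\<in>?Ts. PhiT n T d) < real (card ?Ts) * ?c" .
  thus ?thesis unfolding Phi_apply using c by (simp add: field_simps)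
qed

theorem lemma16:
  fixes n m :: nat and D :: "nat \<Rightarrow> (nat \<times> nat) set"
  assumes "n \<ge> 4"
    and "\<And>i. i \<le> m \<Longrightarrow> noncrossing n (D i)"
    and "\<And>i. i < m \<Longrightarrow> D i \<subset> D (Suc i)"
  shows "inj_on (\<lambda>i. Phi n (D i)) {0..m}
       \<and> \<not> affine_dependent ((\<lambda>i. Phi n (D i)) ` {0..m})"
proof -
  define P where "P = (\<lambda>i. Phi n (D i))"
  define c0 where "c0 = 1 / (real n - 3)"
  have mono: "D j \<subseteq> D k" if "j \<le> k" "k \<le> m" for j k
    using that
  proof (induction k)
    case 0 thus ?case by simp
  next
    case (Suc k)
    show ?case
    proof (cases "j = Suc k")
      case True thus ?thesis by simp
    next
      case False
      hence "D j \<subseteq> D k" using Suc by simp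
      moreover have "D k \<subseteq> D (Suc k)" using assms(3)[of k] Suc.prems by auto
      ultimately show ?thesis by blast
    qed
  qed
  have "\<forall>k. \<exists>d. k < m \<longrightarrow> d \<in> D (Suc k) \<and> d \<notin> D k" using assms(3) by blast
  then obtain g where g: "\<And>k. k < m \<Longrightarrow> g k \<in> D (Suc k) \<and> g k \<notin> D k" by metis
  have hi: "P j (g k) = c0" if "k < m" "Suc k \<le> j" "j \<le> m" for j k
    unfolding P_def c0_def using Phi_in[OF assms(2)[OF that(3)]] mono[OF that(2,3)] g[OF that(1)] by blast
  have lo: "P k (g k) < c0" if "k < m" for k
  proof -
    have "insert (g k) (D k) \<subseteq> D (Suc k)" using g[OF that] mono[of k "Suc k"] that by auto
    hence "noncrossing n (insert (g k) (D k))" using assms(2)[of "Suc k"] that noncrossing_subset by auto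
    thus ?thesis unfolding P_def c0_def using Phi_lt[OF assms(1) assms(2)[of k]] that g[OF that] by auto
  qed
  have inj: "inj_on P {0..m}"
  proof (rule inj_onI)
    have *: "P j \<noteq> P k" if "j < k" "k \<le> m" for j k
    proof
      assume "P j = P k"
      hence "P j (g j) = P k (g j)" by simp
      moreover have "P k (g j) = c0" using hi[of j k] that by auto
      moreover have "P j (g j) < c0" using lo[of j] that by auto
      ultimately show False by simp
    qed
    fix j k assume "j \<in> {0..m}" "k \<in> {0..m}" "P j = P k"
    thus "j = k" using *[of j k] *[of k j] by (metis atLeastAtMost_iff linorder_neqE_nat)
  qed
  have indep: "\<not> affine_dependent (P ` {0..m})"
  proof
    assume "affine_dependent (P ` {0..m})"
    then obtain U where U: "sum U (P ` {0..m}) = 0" "\<exists>v\<in>P ` {0..m}. U v \<noteq> 0"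
      "(\<Sum>v\<in>P ` {0..m}. U v *\<^sub>R v) = 0"
      using affine_dependent_explicit_finite[of "P ` {0..m}"] by auto
    define c where "c = (\<lambda>j. U (P j))"
    have s1: "(\<Sum>j\<in>{0..m}. c j) = 0" using U(1) sum.reindex[OF inj, of U] by (simp add: c_def)
    have s2: "(\<Sum>j\<in>{0..m}. c j * P j x) = 0" for x
    proof -
      have "(\<Sum>j\<in>{0..m}. c j *\<^sub>R P j) = 0"
        using U(3) sum.reindex[OF inj, of "\<lambda>v. U v *\<^sub>R v"] by (simp add: c_def)
      hence "(\<Sum>j\<in>{0..m}. c j *\<^sub>R P j) x = 0" by simp
      thus ?thesis by (simp add: sum_fun_apply scaleR_fun_def)
    qed
    have zero: "\<forall>j<k. c j = 0" if "k \<le> m" for k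
      using that
    proof (induction k)
      case 0 thus ?case by simp
    next
      case (Suc k)
      hence IH: "\<forall>j<k. c j = 0" and km: "k < m" by auto
      have "(\<Sum>j\<in>{0..m}. c j * (P j (g k) - c0)) = 0"
        using s2[of "g k"] s1 by (simp add: right_diff_distrib sum_subtractf sum_distrib_right[symmetric])
      moreover have "(\<Sum>j\<in>{0..m}. c j * (P j (g k) - c0)) = c k * (P k (g k) - c0)"
      proof -
        have "(\<Sum>j\<in>{0..m}. c j * (P j (g k) - c0)) =
              c k * (P k (g k) - c0) + (\<Sum>j\<in>{0..m} - {k}. c j * (P j (g k) - c0))"
          using km by (subst sum.remove[of _ k]) auto
        moreover have "(\<Sum>j\<in>{0..m} - {k}. c j * (P j (g k) - c0)) = 0"
        proof (rule sum.neutral, rule ballI)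
          fix j assume j: "j \<in> {0..m} - {k}"
          show "c j * (P j (g k) - c0) = 0"
          proof (cases "j < k")
            case True thus ?thesis using IH by simp
          next
            case False thus ?thesis using hi[of k j] j km by auto
          qed
        qed
        ultimately show ?thesis by simp
      qed
      ultimately have "c k * (P k (g k) - c0) = 0" by simp
      moreover have "P k (g k) - c0 \<noteq> 0" using lo[OF km] by simp
      ultimately have "c k = 0" by simp
      thus ?case using IH less_Suc_eq by auto
    qed
    have zm: "\<forall>j<m. c j = 0" using zero[of m] by simp
    have "(\<Sum>j\<in>{0..m}. c j) = c m + (\<Sum>j\<in>{0..m} - {m}. c j)"
      by (subst sum.remove[of _ m]) auto
    moreover have "(\<Sum>j\<in>{0..m} - {m}. c j) = 0" using zm by (intro sum.neutral) auto
    ultimately have "c m = 0" using s1 by simp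
    hence "\<forall>j\<in>{0..m}. c j = 0" using zm by (metis atLeastAtMost_iff le_neq_implies_less)
    thus False using U(2) by (auto simp: c_def)
  qed
  show ?thesis using inj indep unfolding P_def by blast
qed

end
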